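(* Let $S$ be a commutative semigroup and $H$ a subsemigroup of $S$. Suppose $p$ is a monoid congruence on $S$ such that $H$ is (the congruence class that is) the identity element of $S/p$. Let $\{H_i : i\in I\}$ be the family of all subsets $H_i$ of $S$ satisfying $H\subseteq \mathrm{Sep}\,H_i$. Then $$P(H;H_i,I)\subseteq p\subseteq P_H,$$ where $P(H;H_i,I)=\{(a,b)\in S\times S:\ H_i\dots a=H_i\dots b \text{ for all } i\in I\}$ and $P_H=\{(a,b)\in S\times S:\ H\dots a=H\dots b\}$.
   Context: For a semigroup $S$ and $A\subseteq S$, $\mathrm{Sep}\,A$ (the separator of $A$) is the set of all $x\in S$ with $xA\subseteq A$, $Ax\subseteq A$, $x(S\setminus A)\subseteq S\setminus A$ and $(S\setminus A)x\subseteq S\setminus A$. For $A\subseteq S$ and $a\in S$, $A\dots a=\{(x,y)\in S\times S:\ xay\in A\}$. A congruence $p$ on $S$ is a monoid congruence if the factor semigroup $S/p$ has an identity element. *)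

theory Defs
  imports Main
begin

text \<open>The semigroup S is the whole type 'a (of class semigroup_mult).\<close>

definition Sep :: "'a::semigroup_mult set \<Rightarrow> 'a set" where
  "Sep A = {x. (\<forall>a\<in>A. x * a \<in> A) \<and> (\<forall>a\<in>A. a * x \<in> A) \<and>
                (\<forall>a\<in>-A. x * a \<in> -A) \<and> (\<forall>a\<in>-A. a * x \<in> -A)}"

definition dots :: "'a::semigroup_mult set \<Rightarrow> 'a \<Rightarrow> ('a \<times> 'a) set" where
  "dots A a = {(x, y). x * a * y \<in> A}"

definition subsemigroup :: "'a::semigroup_mult set \<Rightarrow> bool" where
  "subsemigroup H \<longleftrightarrow> (\<forall>x\<in>H. \<forall>y\<in>H. x * y \<in> H)"

definition congruence :: "('a::semigroup_mult \<times> 'a) set \<Rightarrow> bool" where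
  "congruence p \<longleftrightarrow> equiv UNIV p \<and>
     (\<forall>a b c. (a, b) \<in> p \<longrightarrow> (c * a, c * b) \<in> p \<and> (a * c, b * c) \<in> p)"

definition identity_rep :: "('a::semigroup_mult \<times> 'a) set \<Rightarrow> 'a \<Rightarrow> bool" where
  "identity_rep p e \<longleftrightarrow> (\<forall>a. (e * a, a) \<in> p \<and> (a * e, a) \<in> p)"

definition monoid_congruence :: "('a::semigroup_mult \<times> 'a) set \<Rightarrow> bool" where
  "monoid_congruence p \<longleftrightarrow> congruence p \<and> (\<exists>e. identity_rep p e)"

definition P_H :: "'a::semigroup_mult set \<Rightarrow> ('a \<times> 'a) set" where
  "P_H H = {(a, b). dots H a = dots H b}"

definition P_fam :: "'a::semigroup_mult set \<Rightarrow> ('a \<times> 'a) set" where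
  "P_fam H = {(a, b). \<forall>A. H \<subseteq> Sep A \<longrightarrow> dots A a = dots A b}"

end

theory Submission
  imports Defs
begin

theorem theorem4:
  fixes H :: "'a::ab_semigroup_mult set" and p :: "('a \<times> 'a) set"
  assumes "subsemigroup H"
    and "monoid_congruence p"
    and "\<exists>e. identity_rep p e \<and> H = p `` {e}"
  shows "P_fam H \<subseteq> p \<and> p \<subseteq> P_H H"
proof -
  obtain e where ide: "identity_rep p e" and He: "H = p `` {e}" using assms(3) by blast
  have cong: "congruence p" using assms(2) monoid_congruence_def by blast
  have eq: "equiv UNIV p" using cong congruence_def by blast
  have refl: "(x,x) \<in> p" for x using eq by (simp add: equiv_def refl_on_def)
  have sym: "(x,y) \<in> p \<Longrightarrow> (y,x) \<in> p" for x y using eq by (meson equiv_def symD)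
  have trans: "(x,y) \<in> p \<Longrightarrow> (y,z) \<in> p \<Longrightarrow> (x,z) \<in> p" for x y z
    using eq by (meson equiv_def transD)
  have cl: "(a,b) \<in> p \<Longrightarrow> (c*a, c*b) \<in> p \<and> (a*c, b*c) \<in> p" for a b c
    using cong congruence_def by blast
  have el: "(e*a, a) \<in> p" "(a*e, a) \<in> p" for a using ide identity_rep_def by blast+
  have eae: "(e*a*e, a) \<in> p" for a using trans[OF el(2)[of "e*a"] el(1)[of a]] by simp
  have mul: "(a,b) \<in> p \<Longrightarrow> (x*a*y, x*b*y) \<in> p" for a b x y
    using cl by (metis)
  have part1: "P_fam H \<subseteq> p"
  proof
    fix q assume q: "q \<in> P_fam H"
    obtain a b where qab: "q = (a,b)" by force
    let ?A = "p `` {a}"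
    have "H \<subseteq> Sep ?A"
    proof
      fix h assume "h \<in> H"
      hence eh: "(e,h) \<in> p" using He by blast
      have hx: "(h*x, x) \<in> p" for x using trans[OF sym[OF cl[OF eh, THEN conjunct2, of x]] el(1)[of x]] by simp
      have xh: "(x*h, x) \<in> p" for x using hx by (metis mult.commute)
      have "h*x \<in> ?A \<longleftrightarrow> x \<in> ?A" for x using hx trans sym by blast
      moreover have "x*h \<in> ?A \<longleftrightarrow> x \<in> ?A" for x using xh trans sym by blast
      ultimately show "h \<in> Sep ?A" unfolding Sep_def by auto
    qed
    hence "dots ?A a = dots ?A b" using q qab P_fam_def by blast
    moreover have "(e,e) \<in> dots ?A a" using eae sym unfolding dots_def by auto
    ultimately have "(e,e) \<in> dots ?A b" by simp
    hence "(a, e*b*e) \<in> p" unfolding dots_def by auto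
    thus "q \<in> p" using qab trans eae by blast
  qed
  have part2: "p \<subseteq> P_H H"
  proof
    fix q assume q: "q \<in> p"
    obtain a b where qab: "q = (a,b)" by force
    have "dots H a = dots H b"
      unfolding dots_def He using mul[of a b] mul[of b a] q qab sym trans by blast
    thus "q \<in> P_H H" using qab P_H_def by blast
  qed
  show ?thesis using part1 part2 by blast
qed

end
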